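(* Let $f:\mathbb{R}^m\to\mathbb{R}\cup\{+\infty\}$ be a proper lower semicontinuous convex function and let $\bar x\in S_f$ be such that $\min_{\|h\|=1}f'(\bar x,h)\neq 0$. Then the inequality $f(x)\le 0$ has a local error bound at $\bar x$, and moreover $$\tau_{\min}(f,\bar x)\le \frac{1}{\left|\min_{\|h\|=1}f'(\bar x,h)\right|}.$$
   Context: $\mathbb{R}^m$ carries the Euclidean norm, $B(\bar x,\delta)$ is the closed ball of radius $\delta$ around $\bar x$, and $d(x,D)=\inf\{\|x-y\|:y\in D\}$ (with $\inf\emptyset=+\infty$). $f'(\bar x,h):=\lim_{t\to0^+}\frac{f(\bar x+th)-f(\bar x)}{t}$ is the directional derivative. $S_f:=\{x\in\mathbb{R}^m: f(x)\le 0\}$. The inequality $f(x)\le0$ has a local error bound at $\bar x$ if there exist $\tau,\delta\in(0,+\infty)$ with $d(x,S_f)\le\tau[f(x)]_+$ for all $x\in B(\bar x,\delta)$, where $[t]_+=\max\{t,0\}$. The local error bound modulus is $\tau_{\min}(f,\bar x):=\inf\{\tau>0:\text{there exists }\delta>0\text{ such that }d(x,S_f)\le\tau[f(x)]_+\ \forall x\in B(\bar x,\delta)\}$. *)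

theory Defs
  imports "HOL-Analysis.Analysis"
begin

text \<open>Extended-real valued functions f : R^m -> R \<union> {+\<infinity>} are modelled as
  maps into ereal that never take the value -\<infinity>.\<close>

definition proper_fun :: "('a \<Rightarrow> ereal) \<Rightarrow> bool" where
  "proper_fun f \<longleftrightarrow> (\<forall>x. f x \<noteq> -\<infinity>) \<and> (\<exists>x. f x \<noteq> \<infinity>)"

definition lsc_fun :: "('a::topological_space \<Rightarrow> ereal) \<Rightarrow> bool" where
  "lsc_fun f \<longleftrightarrow> (\<forall>x. f x \<le> Liminf (at x) f)"

definition convex_fun :: "('a::real_vector \<Rightarrow> ereal) \<Rightarrow> bool" where
  "convex_fun f \<longleftrightarrow>
     (\<forall>x y t. 0 \<le> t \<and> t \<le> 1 \<longrightarrow>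
        f ((1 - t) *\<^sub>R x + t *\<^sub>R y) \<le> ereal (1 - t) * f x + ereal t * f y)"

definition dir_deriv :: "('a::real_normed_vector \<Rightarrow> ereal) \<Rightarrow> 'a \<Rightarrow> 'a \<Rightarrow> ereal" where
  "dir_deriv f xb h = Lim (at_right (0::real)) (\<lambda>t. (f (xb + t *\<^sub>R h) - f xb) / ereal t)"

definition sublevel0 :: "('a \<Rightarrow> ereal) \<Rightarrow> 'a set" where
  "sublevel0 f = {x. f x \<le> 0}"

text \<open>Distance to a set, with inf of the empty set = +\<infinity>.\<close>
definition edist_set :: "'a::metric_space \<Rightarrow> 'a set \<Rightarrow> ereal" where
  "edist_set x D = (INF y\<in>D. ereal (dist x y))"

definition local_error_bound :: "('a::metric_space \<Rightarrow> ereal) \<Rightarrow> 'a \<Rightarrow> bool" where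
  "local_error_bound f xb \<longleftrightarrow>
     (\<exists>\<tau> \<delta>. 0 < \<tau> \<and> 0 < \<delta> \<and>
        (\<forall>x\<in>cball xb \<delta>. edist_set x (sublevel0 f) \<le> ereal \<tau> * max (f x) 0))"

definition tau_min :: "('a::metric_space \<Rightarrow> ereal) \<Rightarrow> 'a \<Rightarrow> ereal" where
  "tau_min f xb = Inf {ereal \<tau> | \<tau>. 0 < \<tau> \<and> (\<exists>\<delta>>0.
        \<forall>x\<in>cball xb \<delta>. edist_set x (sublevel0 f) \<le> ereal \<tau> * max (f x) 0)}"

end

theory Submission
  imports Defs
begin

lemma conv_real:
  assumes "convex_fun f" "f x = ereal a" "f y = ereal b" "0 \<le> l" "l \<le> 1"
  shows "f ((1 - l) *\<^sub>R x + l *\<^sub>R y) \<le> ereal ((1 - l) * a + l * b)"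
  using assms unfolding convex_fun_def by (metis times_ereal.simps(1) plus_ereal.simps(1))

lemma fin_val:
  assumes "proper_fun f" "f x \<noteq> \<infinity>"
  obtains a where "f x = ereal a"
  using assms unfolding proper_fun_def by (cases "f x") auto

lemma Q_mono:
  fixes f :: "'a::real_normed_vector \<Rightarrow> ereal"
  assumes cv: "convex_fun f" and pr: "proper_fun f" and c: "f xb = ereal c"
    and st: "0 < s" "s \<le> t"
  shows "(f (xb + s *\<^sub>R h) - f xb) / ereal s \<le> (f (xb + t *\<^sub>R h) - f xb) / ereal t"
proof (cases "f (xb + t *\<^sub>R h) = \<infinity>")
  case True
  have "(f (xb + t *\<^sub>R h) - f xb) / ereal t = \<infinity>"
    using True c st by (simp add: divide_ereal_def)
  then show ?thesis by simp
next
  case False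
  obtain b where b: "f (xb + t *\<^sub>R h) = ereal b" by (rule fin_val[OF pr False])
  have eq: "xb + s *\<^sub>R h = (1 - s/t) *\<^sub>R xb + (s/t) *\<^sub>R (xb + t *\<^sub>R h)"
    using st by (simp add: algebra_simps)
  have le: "f (xb + s *\<^sub>R h) \<le> ereal ((1 - s/t) * c + (s/t) * b)"
    unfolding eq by (rule conv_real[OF cv c b]) (use st in auto)
  then have "f (xb + s *\<^sub>R h) \<noteq> \<infinity>" by auto
  then obtain a where a: "f (xb + s *\<^sub>R h) = ereal a" by (rule fin_val[OF pr])
  have "a \<le> (1 - s/t) * c + (s/t) * b" using le unfolding a by (simp only: ereal_less_eq)
  then have "a - c \<le> (s/t) * (b - c)" by (simp add: left_diff_distrib right_diff_distrib)
  then have "(a - c) / s \<le> (b - c) / t" using st by (simp add: field_simps)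
  moreover have "(f (xb + s *\<^sub>R h) - f xb) / ereal s = ereal ((a - c) / s)"
    unfolding a c using st by simp
  moreover have "(f (xb + t *\<^sub>R h) - f xb) / ereal t = ereal ((b - c) / t)"
    unfolding b c using st by simp
  ultimately show ?thesis by simp
qed

lemma dd_eq:
  fixes f :: "'a::real_normed_vector \<Rightarrow> ereal"
  assumes cv: "convex_fun f" and pr: "proper_fun f" and c: "f xb = ereal c"
  shows "dir_deriv f xb h = (INF t\<in>{0<..}. (f (xb + t *\<^sub>R h) - f xb) / ereal t)"
proof -
  define Q where "Q = (\<lambda>t::real. (f (xb + t *\<^sub>R h) - f xb) / ereal t)"
  define L where "L = (INF t\<in>{0<..}. Q t)"
  have "(Q \<longlongrightarrow> L) (at_right 0)"
  proof (rule order_tendstoI)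
    fix a assume "a < L"
    then have "\<forall>t>0. a < Q t" unfolding L_def by (meson INF_lower greaterThan_iff less_le_trans)
    then show "eventually (\<lambda>t. a < Q t) (at_right 0)"
      unfolding eventually_at_right_field by (intro exI[of _ 1]) auto
  next
    fix a assume "L < a"
    then obtain s where s: "s > 0" "Q s < a" unfolding L_def INF_less_iff by auto
    have "\<forall>t>0. t < s \<longrightarrow> Q t < a"
      using Q_mono[OF cv pr c] s unfolding Q_def by (meson less_imp_le le_less_trans)
    then show "eventually (\<lambda>t. Q t < a) (at_right 0)"
      unfolding eventually_at_right_field using s by blast
  qed
  then have "Lim (at_right 0) Q = L" by (intro tendsto_Lim) auto
  then show ?thesis unfolding dir_deriv_def Q_def L_def by simp
qed


lemma edist_le:
  assumes "f y \<le> 0"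
  shows "edist_set x (sublevel0 f) \<le> ereal (dist x y)"
  unfolding edist_set_def by (rule INF_lower) (use assms in \<open>simp add: sublevel0_def\<close>)

lemma reduce:
  fixes f :: "'a::metric_space \<Rightarrow> ereal"
  assumes tau: "0 < \<tau>" and pr: "proper_fun f"
    and H: "\<And>b. f x = ereal b \<Longrightarrow> 0 < b \<Longrightarrow> \<exists>y. f y \<le> 0 \<and> dist x y \<le> \<tau> * b"
  shows "edist_set x (sublevel0 f) \<le> ereal \<tau> * max (f x) 0"
proof (cases "f x")
  case (real b)
  show ?thesis
  proof (cases "b \<le> 0")
    case True
    have "edist_set x (sublevel0 f) \<le> ereal (dist x x)"
      by (rule edist_le) (use real True in simp)
    moreover have "max (f x) 0 = 0" using real True by (simp add: max_def)
    ultimately show ?thesis by (simp add: zero_ereal_def)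
  next
    case False
    then obtain y where y: "f y \<le> 0" "dist x y \<le> \<tau> * b" using H real by force
    have "edist_set x (sublevel0 f) \<le> ereal (dist x y)" by (rule edist_le[where f=f, OF y(1)])
    also have "\<dots> \<le> ereal (\<tau> * b)" using y(2) by simp
    also have "\<dots> = ereal \<tau> * max (f x) 0" using real False by (simp add: max_def)
    finally show ?thesis .
  qed
next
  case PInf
  then show ?thesis using tau by simp
next
  case MInf
  then show ?thesis using pr unfolding proper_fun_def by simp
qed

lemma dist_comb:
  fixes x z :: "'a::real_normed_vector"
  assumes "0 \<le> l"
  shows "dist x ((1 - l) *\<^sub>R x + l *\<^sub>R z) = l * norm (x - z)"
proof -
  have "x - ((1 - l) *\<^sub>R x + l *\<^sub>R z) = l *\<^sub>R (x - z)" by (simp add: algebra_simps)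
  then show ?thesis using assms by (simp add: dist_norm)
qed


lemma case_pos:
  fixes f :: "'a::real_normed_vector \<Rightarrow> ereal"
  assumes cv: "convex_fun f" and pr: "proper_fun f" and c: "f xb = ereal c" "c \<le> 0"
    and D1: "\<And>h t. norm h = 1 \<Longrightarrow> 0 < t \<Longrightarrow> \<mu> \<le> (f (xb + t *\<^sub>R h) - f xb) / ereal t"
    and tau: "0 < \<tau>" "\<And>r. \<mu> = ereal r \<Longrightarrow> 1 < \<tau> * r" and mu: "0 < \<mu>"
  shows "edist_set x (sublevel0 f) \<le> ereal \<tau> * max (f x) 0"
proof (rule reduce[OF tau(1) pr])
  fix b assume b: "f x = ereal b" "0 < b"
  have "x \<noteq> xb" using b c by auto
  define t where "t = norm (x - xb)"
  have t: "0 < t" using \<open>x \<noteq> xb\<close> by (simp add: t_def)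
  define h where "h = (1 / t) *\<^sub>R (x - xb)"
  have nh: "norm h = 1" using t by (simp add: h_def t_def)
  have xe: "xb + t *\<^sub>R h = x" using t by (simp add: h_def)
  have "\<mu> \<le> (f x - f xb) / ereal t" using D1[OF nh t] xe by simp
  also have "\<dots> = ereal ((b - c) / t)" using b c t by simp
  finally have mle: "\<mu> \<le> ereal ((b - c) / t)" .
  then obtain r where r: "\<mu> = ereal r" using mu by (cases \<mu>) auto
  have r0: "0 < r" using mu r by simp
  have rle: "r * t \<le> b - c" using mle r t by (simp add: field_simps)
  have tr: "1 < \<tau> * r" by (rule tau(2)[OF r])
  have bc: "0 < b - c" using b c by simp
  define l where "l = b / (b - c)"
  have l0: "0 \<le> l" "l \<le> 1" using b c bc by (auto simp: l_def field_simps)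
  define y where "y = (1 - l) *\<^sub>R x + l *\<^sub>R xb"
  have "f y \<le> ereal ((1 - l) * b + l * c)" unfolding y_def by (rule conv_real[OF cv b(1) c(1) l0])
  moreover have "(1 - l) * b + l * c = 0" using bc by (simp add: l_def field_simps)
  ultimately have fy: "f y \<le> 0" by (simp add: zero_ereal_def)
  have "dist x y = l * t" unfolding y_def t_def by (rule dist_comb[OF l0(1)])
  also have "\<dots> = b * t / (b - c)" by (simp add: l_def)
  also have "\<dots> \<le> b / r"
  proof -
    have "b * t * r \<le> b * (b - c)" using rle b(2) by (simp add: mult_left_mono mult.assoc mult.commute[of t r])
    then show ?thesis using bc r0 by (simp add: field_simps)
  qed
  also have "\<dots> \<le> \<tau> * b"
  proof -
    have "1 \<le> \<tau> * r" using tr by simp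
    then have "b * 1 \<le> b * (\<tau> * r)" using b(2) by (intro mult_left_mono) auto
    then have "b \<le> (\<tau> * b) * r" by (simp add: algebra_simps)
    then show ?thesis using r0 by (simp add: field_simps)
  qed
  finally show "\<exists>y. f y \<le> 0 \<and> dist x y \<le> \<tau> * b" using fy by blast
qed

lemma case_neg:
  fixes f :: "'a::real_normed_vector \<Rightarrow> ereal"
  assumes cv: "convex_fun f" and pr: "proper_fun f" and c: "f xb = ereal c" "c \<le> 0"
    and nh: "norm h0 = 1" and m: "m < 0" "1 < \<tau> * (- m)" and tau: "0 < \<tau>"
    and D2: "\<exists>t>0. (f (xb + t *\<^sub>R h0) - f xb) / ereal t < ereal m"
  shows "\<exists>\<delta>>0. \<forall>x\<in>cball xb \<delta>. edist_set x (sublevel0 f) \<le> ereal \<tau> * max (f x) 0"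
proof -
  obtain t0 where t0: "0 < t0" "(f (xb + t0 *\<^sub>R h0) - f xb) / ereal t0 < ereal m" using D2 by blast
  define z where "z = xb + t0 *\<^sub>R h0"
  have "f z \<noteq> \<infinity>"
  proof
    assume "f z = \<infinity>"
    then have "(f (xb + t0 *\<^sub>R h0) - f xb) / ereal t0 = \<infinity>" using c t0(1) by (simp add: z_def divide_ereal_def)
    then show False using t0(2) by simp
  qed
  then obtain bz where bz: "f z = ereal bz" by (rule fin_val[OF pr])
  have "ereal ((bz - c) / t0) < ereal m" using t0 bz c by (simp add: z_def)
  then have "(bz - c) / t0 < m" by simp
  then have "bz - c < m * t0" using t0(1) by (simp add: field_simps)
  then have bzm: "bz < m * t0" using c(2) by simp
  define a where "a = - bz"
  have a: "(- m) * t0 < a" using bzm by (simp add: a_def)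
  have mt0: "0 < (- m) * t0" using m(1) t0(1) by (simp add: mult_neg_pos)
  define \<delta> where "\<delta> = t0 * (\<tau> * (- m) - 1)"
  have d0: "0 < \<delta>" using m t0 by (simp add: \<delta>_def)
  have dt: "\<delta> + t0 = \<tau> * ((- m) * t0)" by (simp add: \<delta>_def algebra_simps)
  show ?thesis
  proof (intro exI[of _ \<delta>] conjI ballI d0)
    fix x assume x: "x \<in> cball xb \<delta>"
    show "edist_set x (sublevel0 f) \<le> ereal \<tau> * max (f x) 0"
    proof (rule reduce[OF tau pr])
      fix b assume b: "f x = ereal b" "0 < b"
      have ba: "0 < b + a" using b a mt0 by simp
      define l where "l = b / (b + a)"
      have l0: "0 \<le> l" "l \<le> 1" using b a mt0 ba by (auto simp: l_def field_simps)
      define y where "y = (1 - l) *\<^sub>R x + l *\<^sub>R z"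
      have "f y \<le> ereal ((1 - l) * b + l * bz)" unfolding y_def by (rule conv_real[OF cv b(1) bz l0])
      moreover have "(1 - l) * b + l * bz = 0" using ba by (simp add: l_def a_def field_simps)
      ultimately have fy: "f y \<le> 0" by (simp add: zero_ereal_def)
      have nxz: "norm (x - z) \<le> \<delta> + t0"
      proof -
        have "norm (x - z) \<le> norm (x - xb) + norm (xb - z)" using norm_triangle_ineq[of "x - xb" "xb - z"] by simp
        moreover have "norm (x - xb) \<le> \<delta>" using x by (simp add: dist_norm norm_minus_commute)
        moreover have "norm (xb - z) = t0" using nh t0(1) by (simp add: z_def)
        ultimately show ?thesis by simp
      qed
      have "dist x y = l * norm (x - z)" unfolding y_def by (rule dist_comb[OF l0(1)])
      also have "\<dots> \<le> l * (\<delta> + t0)" using nxz l0 by (simp add: mult_left_mono)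
      also have "\<dots> = \<tau> * (b * ((- m) * t0) / (b + a))" by (simp add: l_def dt)
      also have "\<dots> \<le> \<tau> * b"
      proof -
        have "b * ((- m) * t0) \<le> b * (b + a)" using a b(2) by (intro mult_left_mono) auto
        then have "b * ((- m) * t0) / (b + a) \<le> b" using ba by (simp add: field_simps)
        then show ?thesis using tau by (intro mult_left_mono) auto
      qed
      finally show "\<exists>y. f y \<le> 0 \<and> dist x y \<le> \<tau> * b" using fy by blast
    qed
  qed
qed


theorem proposition3:
  fixes f :: "'a::euclidean_space \<Rightarrow> ereal" and xb :: 'a
  assumes "proper_fun f" and "lsc_fun f" and "convex_fun f"
    and "xb \<in> sublevel0 f"
    and "\<exists>h0. norm h0 = 1 \<and>
           dir_deriv f xb h0 = (INF h\<in>sphere 0 1. dir_deriv f xb h)"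
    and "(INF h\<in>sphere 0 1. dir_deriv f xb h) \<noteq> 0"
  shows "local_error_bound f xb \<and>
         tau_min f xb \<le> 1 / \<bar>INF h\<in>sphere 0 1. dir_deriv f xb h\<bar>"
proof -
  note pr = assms(1) and cv = assms(3)
  define \<mu> where "\<mu> = (INF h\<in>sphere 0 1. dir_deriv f xb h)"
  obtain h0 where h0: "norm h0 = 1" "dir_deriv f xb h0 = \<mu>" using assms(5) unfolding \<mu>_def by blast
  have mu0: "\<mu> \<noteq> 0" using assms(6) unfolding \<mu>_def .
  have fxb: "f xb \<le> 0" using assms(4) by (simp add: sublevel0_def)
  then have "f xb \<noteq> \<infinity>" by auto
  then obtain c where c: "f xb = ereal c" by (rule fin_val[OF pr])
  have c0: "c \<le> 0" using fxb c by (simp add: zero_ereal_def)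
  have DD: "\<And>h. dir_deriv f xb h = (INF t\<in>{0<..}. (f (xb + t *\<^sub>R h) - f xb) / ereal t)"
    by (rule dd_eq[OF cv pr c])
  have D1: "\<mu> \<le> (f (xb + t *\<^sub>R h) - f xb) / ereal t" if "norm h = 1" "0 < t" for h t
  proof -
    have "\<mu> \<le> dir_deriv f xb h" unfolding \<mu>_def by (rule INF_lower) (use that in simp)
    also have "\<dots> \<le> (f (xb + t *\<^sub>R h) - f xb) / ereal t" unfolding DD by (rule INF_lower) (use that in simp)
    finally show ?thesis .
  qed
  have D2: "\<exists>t>0. (f (xb + t *\<^sub>R h0) - f xb) / ereal t < ereal m" if "\<mu> < ereal m" for m
  proof -
    have "dir_deriv f xb h0 < ereal m" using that h0(2) by (simp only:)
    then have "(INF t\<in>{0<..}. (f (xb + t *\<^sub>R h0) - f xb) / ereal t) < ereal m" unfolding DD .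
    then show ?thesis unfolding INF_less_iff greaterThan_iff Bex_def by blast
  qed
  obtain k :: real where k: "1 / \<bar>\<mu>\<bar> = ereal k" "0 \<le> k"
    and kr: "\<And>r. \<mu> = ereal r \<Longrightarrow> k = 1 / \<bar>r\<bar>"
  proof (cases \<mu>)
    case (real r)
    then have "r \<noteq> 0" using mu0 by (simp add: zero_ereal_def)
    show ?thesis
    proof (rule that[of "1 / \<bar>r\<bar>"])
      show "1 / \<bar>\<mu>\<bar> = ereal (1 / \<bar>r\<bar>)" using real \<open>r \<noteq> 0\<close> by (simp add: one_ereal_def)
    qed (use real in auto)
  qed (use that[of 0] in auto)
  have KEY: "\<exists>\<delta>>0. \<forall>x\<in>cball xb \<delta>. edist_set x (sublevel0 f) \<le> ereal \<tau> * max (f x) 0"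
    if tau: "k < \<tau>" for \<tau>
  proof -
    have tau0: "0 < \<tau>" using tau k(2) by simp
    show ?thesis
    proof (cases "0 < \<mu>")
      case True
      have "1 < \<tau> * r" if r: "\<mu> = ereal r" for r
      proof -
        have "0 < r" using True r by simp
        then have "k = 1 / r" using kr[OF r] by simp
        then have "k * r = 1" using \<open>0 < r\<close> by simp
        moreover have "k * r < \<tau> * r" using tau \<open>0 < r\<close> by (intro mult_strict_right_mono)
        ultimately show ?thesis by simp
      qed
      then have "edist_set x (sublevel0 f) \<le> ereal \<tau> * max (f x) 0" for x
        by (intro case_pos[OF cv pr c c0 D1 tau0 _ True]) auto
      then show ?thesis by (intro exI[of _ 1]) auto
    next
      case False
      then have mneg: "\<mu> < 0" using mu0 by (simp add: not_less order.order_iff_strict)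
      obtain m where m: "\<mu> < ereal m" "m < 0" "1 < \<tau> * (- m)"
      proof (cases \<mu>)
        case (real r)
        have r0: "r < 0" using mneg real by simp
        have "k = - 1 / r" using kr[OF real] r0 by simp
        then have "1 < \<tau> * (- r)"
        proof -
          assume kk: "k = - 1 / r"
          have "k * (- r) < \<tau> * (- r)" using tau r0 by (intro mult_strict_right_mono) auto
          moreover have "k * (- r) = 1" using kk r0 by simp
          ultimately show ?thesis by simp
        qed
        then have "r * \<tau> < - 1" by (simp add: algebra_simps)
        then have r1: "r < - 1 / \<tau>" by (simp only: pos_less_divide_eq[OF tau0])
        define m where "m = (r + (- 1 / \<tau>)) / 2"
        have "\<mu> < ereal m" using real r1 by (simp add: m_def)
        moreover have "m < - 1 / \<tau>" using r1 by (simp add: m_def)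
        moreover have "m < 0"
        proof -
          have "- 1 / \<tau> < 0" using tau0 by simp
          then show ?thesis using \<open>m < - 1 / \<tau>\<close> by linarith
        qed
        moreover have "1 < \<tau> * (- m)"
        proof -
          have "m * \<tau> < - 1" using \<open>m < - 1 / \<tau>\<close> by (simp only: pos_less_divide_eq[OF tau0])
          then show ?thesis by (simp add: algebra_simps)
        qed
        ultimately show ?thesis using that by blast
      next
        case MInf
        show ?thesis by (rule that[of "- 2 / \<tau>"]) (use MInf tau0 in auto)
      next
        case PInf
        then show ?thesis using mneg by simp
      qed
      show ?thesis by (rule case_neg[OF cv pr c c0 h0(1) m(2) m(3) tau0 D2[OF m(1)]])
    qed
  qed
  have LEB: "local_error_bound f xb"
  proof -
    obtain \<delta> where "\<delta> > 0" "\<forall>x\<in>cball xb \<delta>. edist_set x (sublevel0 f) \<le> ereal (k + 1) * max (f x) 0"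
      using KEY[of "k + 1"] by auto
    moreover have "0 < k + 1" using k(2) by simp
    ultimately show ?thesis unfolding local_error_bound_def by blast
  qed
  have "tau_min f xb \<le> ereal k"
  proof (rule ereal_le_epsilon2)
    fix e :: real assume e: "0 < e"
    have "tau_min f xb \<le> ereal (k + e)"
      unfolding tau_min_def
    proof (rule Inf_lower)
      have "0 < k + e" using k(2) e by simp
      moreover have "\<exists>\<delta>>0. \<forall>x\<in>cball xb \<delta>. edist_set x (sublevel0 f) \<le> ereal (k + e) * max (f x) 0"
        using KEY[of "k + e"] e by simp
      ultimately show "ereal (k + e) \<in> {ereal \<tau> | \<tau>. 0 < \<tau> \<and> (\<exists>\<delta>>0.
        \<forall>x\<in>cball xb \<delta>. edist_set x (sublevel0 f) \<le> ereal \<tau> * max (f x) 0)}"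
        by blast
    qed
    then show "tau_min f xb \<le> ereal k + ereal e" by simp
  qed
  moreover have "1 / \<bar>INF h\<in>sphere 0 1. dir_deriv f xb h\<bar> = ereal k" using k(1) unfolding \<mu>_def .
  ultimately show ?thesis using LEB by (simp only:)
qed

end
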